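(* Let $(R,[\cdot_\lambda\cdot],\alpha,\beta)$ be a BiHom-Lie conformal superalgebra and let $k\geq 0$ be an integer. Then $(R,[\cdot_\lambda\cdot]',\alpha^{k+1},\beta^{k+1})$, where $[a_\lambda b]'=[\alpha^k(a)_\lambda\beta^k(b)]$, is a BiHom-Lie conformal superalgebra.
   Context: All spaces are over $\mathbb{C}$. For a $\mathbb{C}[\partial]$-module $V$, $V[\lambda]=\mathbb{C}[\lambda]\otimes V$. $|a|$ denotes the parity of a homogeneous element. In $[x_{-\lambda-\partial}y]$ one writes $[x_\lambda y]=\sum_n\lambda^nc_n$ and replaces $\lambda$ by $-\lambda-\partial$, $\partial$ acting on the $c_n$. A BiHom-Lie conformal superalgebra $(R,[\cdot_\lambda\cdot],\alpha,\beta)$ is a $\mathbb{Z}_2$-graded $\mathbb{C}[\partial]$-module $R=R_0\oplus R_1$ with two commuting linear maps $\alpha,\beta:R\to R$ and a $\mathbb{C}$-linear map $R\otimes R\to R[\lambda]$, $a\otimes b\mapsto[a_\lambda b]$, with $[R_{i\,\lambda}R_j]\subseteq R_{i+j}[\lambda]$, such that for all homogeneous $a,b,c\in R$: (1) $\alpha\partial=\partial\alpha$, $\beta\partial=\partial\beta$; (2) $\alpha([a_\lambda b])=[\alpha(a)_\lambda\alpha(b)]$, $\beta([a_\lambda b])=[\beta(a)_\lambda\beta(b)]$; (3) $[(\partial a)_\lambda b]=-\lambda[a_\lambda b]$, $[a_\lambda(\partial b)]=(\partial+\lambda)[a_\lambda b]$; (4) $[\beta(a)_\lambda\alpha(b)]=-(-1)^{|a||b|}[\beta(b)_{-\lambda-\partial}\alpha(a)]$;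 (5) $[\alpha\beta(a)_\lambda[b_\mu c]]=[[\beta(a)_\lambda b]_{\lambda+\mu}\beta(c)]+(-1)^{|a||b|}[\beta(b)_\mu[\alpha(a)_\lambda c]]$. *)

theory Defs
  imports Complex_Main
begin

(* Conventions.
   * The underlying space R is a type 'a with an abelian group structure and an
     explicit complex scalar multiplication smul, required to form a C-vector space.
   * The partial derivative d is a C-linear map (C[d]-module structure).
   * The Z2-grading R = R0 (+) R1 is given by two subspaces; "grade R0 R1 i" is
     R0 for even i and R1 for odd i; homogeneous of parity i (i<2) means in grade i.
   * A lambda-bracket [a_lam b] = sum_n lam^n c_n in R[lam] is encoded by its
     coefficient function  br a b :: nat => 'a  (br a b n = c_n), of finite support. *)

definition grade :: "'a set \<Rightarrow> 'a set \<Rightarrow> nat \<Rightarrow> 'a set" where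
  "grade R0 R1 i = (if even i then R0 else R1)"

(* coefficients of lam * p, for p given by coefficients c *)
definition lam_mul :: "(nat \<Rightarrow> 'a::zero) \<Rightarrow> nat \<Rightarrow> 'a" where
  "lam_mul c n = (case n of 0 \<Rightarrow> 0 | Suc m \<Rightarrow> c m)"

(* coefficients (in lam) of  sum_n (-lam-d)^n c_n
   = sum_n (-1)^n sum_j (n choose j) lam^j d^(n-j) c_n *)
definition subst_neg :: "(complex \<Rightarrow> 'a \<Rightarrow> 'a) \<Rightarrow> ('a \<Rightarrow> 'a) \<Rightarrow> (nat \<Rightarrow> 'a::ab_group_add)
    \<Rightarrow> nat \<Rightarrow> 'a" where
  "subst_neg smul d c j =
     (\<Sum>n\<in>{n. c n \<noteq> 0}. smul ((-1) ^ n * of_nat (n choose j)) ((d ^^ (n - j)) (c n)))"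

definition BiHomLieConfSuper ::
  "(complex \<Rightarrow> 'a \<Rightarrow> 'a) \<Rightarrow> ('a \<Rightarrow> 'a) \<Rightarrow> 'a set \<Rightarrow> 'a set
   \<Rightarrow> ('a \<Rightarrow> 'a \<Rightarrow> nat \<Rightarrow> 'a::ab_group_add) \<Rightarrow> ('a \<Rightarrow> 'a) \<Rightarrow> ('a \<Rightarrow> 'a) \<Rightarrow> bool" where
  "BiHomLieConfSuper smul d R0 R1 br al be \<longleftrightarrow>
     \<comment> \<open>C-vector space, C[d]-module, Z2-grading\<close>
     vector_space smul \<and>
     Vector_Spaces.linear smul smul d \<and>
     module.subspace smul R0 \<and> module.subspace smul R1 \<and>
     R0 \<inter> R1 = {0} \<and> (\<forall>x. \<exists>y\<in>R0. \<exists>z\<in>R1. x = y + z) \<and>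
     d ` R0 \<subseteq> R0 \<and> d ` R1 \<subseteq> R1 \<and>
     \<comment> \<open>alpha, beta: commuting linear maps, even (parity preserving)\<close>
     Vector_Spaces.linear smul smul al \<and> Vector_Spaces.linear smul smul be \<and>
     al \<circ> be = be \<circ> al \<and>
     al ` R0 \<subseteq> R0 \<and> al ` R1 \<subseteq> R1 \<and> be ` R0 \<subseteq> R0 \<and> be ` R1 \<subseteq> R1 \<and>
     \<comment> \<open>lambda-bracket: C-bilinear, values in R[lambda], respects grading\<close>
     (\<forall>a b. finite {n. br a b n \<noteq> 0}) \<and>
     (\<forall>b n. Vector_Spaces.linear smul smul (\<lambda>a. br a b n)) \<and>
     (\<forall>a n. Vector_Spaces.linear smul smul (\<lambda>b. br a b n)) \<and>
     (\<forall>i j a b n. i < 2 \<longrightarrow> j < 2 \<longrightarrow> a \<in> grade R0 R1 i \<longrightarrow> b \<in> grade R0 R1 j \<longrightarrow>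
         br a b n \<in> grade R0 R1 (i + j)) \<and>
     \<comment> \<open>(1)\<close>
     al \<circ> d = d \<circ> al \<and> be \<circ> d = d \<circ> be \<and>
     \<comment> \<open>(2)\<close>
     (\<forall>a b n. al (br a b n) = br (al a) (al b) n \<and> be (br a b n) = br (be a) (be b) n) \<and>
     \<comment> \<open>(3)\<close>
     (\<forall>a b n. br (d a) b n = - lam_mul (br a b) n \<and>
              br a (d b) n = d (br a b n) + lam_mul (br a b) n) \<and>
     \<comment> \<open>(4) skew-symmetry, for homogeneous a, b\<close>
     (\<forall>i j a b n. i < 2 \<longrightarrow> j < 2 \<longrightarrow> a \<in> grade R0 R1 i \<longrightarrow> b \<in> grade R0 R1 j \<longrightarrow>
         br (be a) (al b) n = smul (- ((-1) ^ (i * j))) (subst_neg smul d (br (be b) (al a)) n)) \<and>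
     \<comment> \<open>(5) Jacobi identity, compared coefficientwise at lambda^n mu^m\<close>
     (\<forall>i j a b c n m. i < 2 \<longrightarrow> j < 2 \<longrightarrow> a \<in> grade R0 R1 i \<longrightarrow> b \<in> grade R0 R1 j \<longrightarrow>
         br (al (be a)) (br b c m) n =
           (\<Sum>r\<le>n. smul (of_nat ((m + r) choose m)) (br (br (be a) b (n - r)) (be c) (m + r)))
           + smul ((-1) ^ (i * j)) (br (be b) (br (al a) c n) m))"

end

theory Submission
  imports Defs
begin

lemma fp_linear:
  assumes "vector_space s" "Vector_Spaces.linear s s f"
  shows "Vector_Spaces.linear s s (f ^^ n)"
proof (induction n)
  case 0 then show ?case using vector_space.linear_id[OF assms(1)] by (simp add: id_def)
next
  case (Suc n) show ?case
    unfolding funpow.simps by (rule Vector_Spaces.linear_compose[OF Suc assms(2)])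
qed

lemma fp_comm:
  assumes "f \<circ> g = g \<circ> f"
  shows "(f ^^ n) (g x) = g ((f ^^ n) x)"
proof (induction n)
  case (Suc n) then show ?case using assms by (simp add: fun_eq_iff)
qed simp

lemma fp_comm2:
  assumes "f \<circ> g = g \<circ> f"
  shows "(f ^^ n) ((g ^^ m) x) = (g ^^ m) ((f ^^ n) x)"
proof (induction m)
  case (Suc m) then show ?case using fp_comm[OF assms] by simp
qed simp

lemma fp_sub:
  assumes "f ` S \<subseteq> S"
  shows "(f ^^ n) ` S \<subseteq> S"
proof (induction n)
  case (Suc n) then show ?case using assms by auto
qed simp

lemma fp_br:
  assumes "\<And>a b n. f (br a b n) = br (f a) (f b) n"
  shows "(f ^^ p) (br a b n) = br ((f ^^ p) a) ((f ^^ p) b) n"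
proof (induction p)
  case (Suc p) then show ?case using assms by simp
qed simp

lemma fp_add: "(f ^^ p) ((f ^^ q) x) = (f ^^ (p + q)) x"
  by (simp add: funpow_add)

theorem mainTheorem3:
  fixes smul :: "complex \<Rightarrow> 'a::ab_group_add \<Rightarrow> 'a"
    and d al be :: "'a \<Rightarrow> 'a"
    and R0 R1 :: "'a set"
    and br :: "'a \<Rightarrow> 'a \<Rightarrow> nat \<Rightarrow> 'a"
    and k :: nat
  assumes "BiHomLieConfSuper smul d R0 R1 br al be"
  shows "BiHomLieConfSuper smul d R0 R1 (\<lambda>a b. br ((al ^^ k) a) ((be ^^ k) b))
           (al ^^ (k + 1)) (be ^^ (k + 1))"
proof -
  note H = assms[unfolded BiHomLieConfSuper_def]
  have vs: "vector_space smul" using H by (elim conjE) assumption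
  have lal: "Vector_Spaces.linear smul smul al" using H by (elim conjE) assumption
  have lbe: "Vector_Spaces.linear smul smul be" using H by (elim conjE) assumption
  have ab: "al \<circ> be = be \<circ> al" using H by (elim conjE) assumption
  have ad: "al \<circ> d = d \<circ> al" using H by (elim conjE) assumption
  have bd: "be \<circ> d = d \<circ> be" using H by (elim conjE) assumption
  have alR1: "al ` R0 \<subseteq> R0" using H by (elim conjE) assumption
  have alR2: "al ` R1 \<subseteq> R1" using H by (elim conjE) assumption
  have beR1: "be ` R0 \<subseteq> R0" using H by (elim conjE) assumption
  have beR2: "be ` R1 \<subseteq> R1" using H by (elim conjE) assumption
  note alR = alR1 alR2 and beR = beR1 beR2
  have fin0: "\<forall>a b. finite {n. br a b n \<noteq> 0}" using H by (elim conjE) assumption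
  have lin10: "\<forall>b n. Vector_Spaces.linear smul smul (\<lambda>a. br a b n)" using H by (elim conjE) assumption
  have lin20: "\<forall>a n. Vector_Spaces.linear smul smul (\<lambda>b. br a b n)" using H by (elim conjE) assumption
  have grb0: "\<forall>i j a b n. i < 2 \<longrightarrow> j < 2 \<longrightarrow> a \<in> grade R0 R1 i \<longrightarrow> b \<in> grade R0 R1 j \<longrightarrow>
         br a b n \<in> grade R0 R1 (i + j)" using H by (elim conjE) assumption
  have ab0: "\<forall>a b n. al (br a b n) = br (al a) (al b) n \<and> be (br a b n) = br (be a) (be b) n"
    using H by (elim conjE) assumption
  have d30: "\<forall>a b n. br (d a) b n = - lam_mul (br a b) n \<and>
              br a (d b) n = d (br a b n) + lam_mul (br a b) n" using H by (elim conjE) assumption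
  have sk0: "\<forall>i j a b n. i < 2 \<longrightarrow> j < 2 \<longrightarrow> a \<in> grade R0 R1 i \<longrightarrow> b \<in> grade R0 R1 j \<longrightarrow>
         br (be a) (al b) n = smul (- ((-1) ^ (i * j))) (subst_neg smul d (br (be b) (al a)) n)"
    using H by (elim conjE) assumption
  have jac0: "\<forall>i j a b c n m. i < 2 \<longrightarrow> j < 2 \<longrightarrow> a \<in> grade R0 R1 i \<longrightarrow> b \<in> grade R0 R1 j \<longrightarrow>
         br (al (be a)) (br b c m) n =
           (\<Sum>r\<le>n. smul (of_nat ((m + r) choose m)) (br (br (be a) b (n - r)) (be c) (m + r)))
           + smul ((-1) ^ (i * j)) (br (be b) (br (al a) c n) m)" using H by (elim conjE) assumption
  note fin = fin0[rule_format] and lin1 = lin10[rule_format] and lin2 = lin20[rule_format]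
    and grb = grb0[rule_format] and sk = sk0[rule_format] and jac = jac0[rule_format] and d3 = d30[rule_format]
  have alb: "\<And>a b n. al (br a b n) = br (al a) (al b) n" using ab0 by blast
  have beb: "\<And>a b n. be (br a b n) = br (be a) (be b) n" using ab0 by blast
  have galp: "\<And>p i x. x \<in> grade R0 R1 i \<Longrightarrow> (al ^^ p) x \<in> grade R0 R1 i"
    using fp_sub[OF alR(1)] fp_sub[OF alR(2)] by (auto simp: grade_def image_subset_iff)
  have gbep: "\<And>p i x. x \<in> grade R0 R1 i \<Longrightarrow> (be ^^ p) x \<in> grade R0 R1 i"
    using fp_sub[OF beR(1)] fp_sub[OF beR(2)] by (auto simp: grade_def image_subset_iff)
  have cab: "\<And>p q x. (al ^^ p) ((be ^^ q) x) = (be ^^ q) ((al ^^ p) x)"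
    using fp_comm2[OF ab] .
  have cad: "\<And>p x. (al ^^ p) (d x) = d ((al ^^ p) x)" using fp_comm[OF ad] .
  have cbd: "\<And>p x. (be ^^ p) (d x) = d ((be ^^ p) x)" using fp_comm[OF bd] .
  have albp: "\<And>p a b n. (al ^^ p) (br a b n) = br ((al ^^ p) a) ((al ^^ p) b) n"
    using fp_br[where f=al and br=br, OF alb] .
  have bebp: "\<And>p a b n. (be ^^ p) (br a b n) = br ((be ^^ p) a) ((be ^^ p) b) n"
    using fp_br[where f=be and br=br, OF beb] .
  show ?thesis
    unfolding BiHomLieConfSuper_def
  proof (intro conjI allI impI)
    show "vector_space smul" by (rule vs)
  next
    show "Vector_Spaces.linear smul smul d" using H by (elim conjE) assumption
  next
    show "module.subspace smul R0" using H by (elim conjE) assumption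
  next
    show "module.subspace smul R1" using H by (elim conjE) assumption
  next
    show "R0 \<inter> R1 = {0}" using H by (elim conjE) assumption
  next
    fix x
    have sp0: "\<forall>x. \<exists>y\<in>R0. \<exists>z\<in>R1. x = y + z" using H by (elim conjE) assumption
    then show "\<exists>y\<in>R0. \<exists>z\<in>R1. x = y + z" by blast
  next
    show "d ` R0 \<subseteq> R0" using H by (elim conjE) assumption
  next
    show "d ` R1 \<subseteq> R1" using H by (elim conjE) assumption
  next
    show "Vector_Spaces.linear smul smul (al ^^ (k + 1))" using fp_linear[OF vs lal] .
  next
    show "Vector_Spaces.linear smul smul (be ^^ (k + 1))" using fp_linear[OF vs lbe] .
  next
    show "(al ^^ (k + 1)) \<circ> (be ^^ (k + 1)) = (be ^^ (k + 1)) \<circ> (al ^^ (k + 1))"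
      using cab by (simp add: fun_eq_iff del: funpow.simps)
  next
    show "(al ^^ (k + 1)) ` R0 \<subseteq> R0" by (rule fp_sub[OF alR(1)])
  next
    show "(al ^^ (k + 1)) ` R1 \<subseteq> R1" by (rule fp_sub[OF alR(2)])
  next
    show "(be ^^ (k + 1)) ` R0 \<subseteq> R0" by (rule fp_sub[OF beR(1)])
  next
    show "(be ^^ (k + 1)) ` R1 \<subseteq> R1" by (rule fp_sub[OF beR(2)])
  next
    fix a b show "finite {n. br ((al ^^ k) a) ((be ^^ k) b) n \<noteq> 0}" by (rule fin)
  next
    fix b n
    show "Vector_Spaces.linear smul smul (\<lambda>a. br ((al ^^ k) a) ((be ^^ k) b) n)"
      using Vector_Spaces.linear_compose[OF fp_linear[OF vs lal, of k] lin1[of "(be ^^ k) b" n]]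
      by (simp add: o_def)
  next
    fix a n
    show "Vector_Spaces.linear smul smul (\<lambda>b. br ((al ^^ k) a) ((be ^^ k) b) n)"
      using Vector_Spaces.linear_compose[OF fp_linear[OF vs lbe, of k] lin2[of "(al ^^ k) a" n]]
      by (simp add: o_def)
  next
    fix i j a b n
    assume "i < 2" "j < 2" "a \<in> grade R0 R1 i" "b \<in> grade R0 R1 j"
    then show "br ((al ^^ k) a) ((be ^^ k) b) n \<in> grade R0 R1 (i + j)"
      using grb galp gbep by blast
  next
    show "(al ^^ (k + 1)) \<circ> d = d \<circ> (al ^^ (k + 1))"
      using cad by (simp add: fun_eq_iff del: funpow.simps)
  next
    show "(be ^^ (k + 1)) \<circ> d = d \<circ> (be ^^ (k + 1))"
      using cbd by (simp add: fun_eq_iff del: funpow.simps)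
  next
    fix a b n
    show "(al ^^ (k + 1)) (br ((al ^^ k) a) ((be ^^ k) b) n) =
          br ((al ^^ k) ((al ^^ (k + 1)) a)) ((be ^^ k) ((al ^^ (k + 1)) b)) n"
      by (simp only: albp bebp fp_add cab) (simp add: add_ac)
  next
    fix a b n
    show "(be ^^ (k + 1)) (br ((al ^^ k) a) ((be ^^ k) b) n) =
          br ((al ^^ k) ((be ^^ (k + 1)) a)) ((be ^^ k) ((be ^^ (k + 1)) b)) n"
      by (simp only: albp bebp fp_add cab) (simp add: add_ac)
  next
    fix a b n
    show "br ((al ^^ k) (d a)) ((be ^^ k) b) n = - lam_mul (\<lambda>n. br ((al ^^ k) a) ((be ^^ k) b) n) n"
      using d3 cad cbd by simp
  next
    fix a b n
    show "          br ((al ^^ k) a) ((be ^^ k) (d b)) n =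
          d (br ((al ^^ k) a) ((be ^^ k) b) n) + lam_mul (\<lambda>n. br ((al ^^ k) a) ((be ^^ k) b) n) n"
      using d3 cad cbd by simp
  next
    fix i j a b n
    assume ij: "i < 2" "j < 2" and g: "a \<in> grade R0 R1 i" "b \<in> grade R0 R1 j"
    define X where "X x = (al ^^ k) ((be ^^ k) x)" for x
    have e1: "(al ^^ k) ((be ^^ (k + 1)) x) = be (X x)" for x
      unfolding X_def by (simp only: funpow_Suc_right add_Suc_right add_0_right o_apply cab) (simp add: fp_comm[OF ab[symmetric]])
    have e2: "(be ^^ k) ((al ^^ (k + 1)) x) = al (X x)" for x
      unfolding X_def by (simp add: fp_comm[OF ab[symmetric]] cab)
    have gX: "X a \<in> grade R0 R1 i" "X b \<in> grade R0 R1 j"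
      unfolding X_def using g galp gbep by blast+
    have ee: "(\<lambda>n. br ((al ^^ k) ((be ^^ (k + 1)) b)) ((be ^^ k) ((al ^^ (k + 1)) a)) n)
           = br (be (X b)) (al (X a))" by (simp only: e1 e2)
    show "br ((al ^^ k) ((be ^^ (k + 1)) a)) ((be ^^ k) ((al ^^ (k + 1)) b)) n =
         smul (- ((- 1) ^ (i * j)))
          (subst_neg smul d (\<lambda>n. br ((al ^^ k) ((be ^^ (k + 1)) b)) ((be ^^ k) ((al ^^ (k + 1)) a)) n) n)"
      unfolding ee e1 e2 by (rule sk[OF ij gX])
  next
    fix i j a b c n m
    assume ij: "i < 2" "j < 2" and g: "a \<in> grade R0 R1 i" "b \<in> grade R0 R1 j"
    show "br ((al ^^ k) ((al ^^ (k + 1)) ((be ^^ (k + 1)) a)))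
          ((be ^^ k) (br ((al ^^ k) b) ((be ^^ k) c) m)) n =
         (\<Sum>r\<le>n. smul (of_nat ((m + r) choose m))
            (br ((al ^^ k) (br ((al ^^ k) ((be ^^ (k + 1)) a)) ((be ^^ k) b) (n - r)))
              ((be ^^ k) ((be ^^ (k + 1)) c)) (m + r))) +
         smul ((- 1) ^ (i * j))
          (br ((al ^^ k) ((be ^^ (k + 1)) b))
            ((be ^^ k) (br ((al ^^ k) ((al ^^ (k + 1)) a)) ((be ^^ k) c) n)) m)"
    proof -
      define a0 where "a0 = (al ^^ (2*k)) ((be ^^ k) a)"
      define b0 where "b0 = (be ^^ k) ((al ^^ k) b)"
      define c0 where "c0 = (be ^^ (2*k)) c"
      have ga: "a0 \<in> grade R0 R1 i" "b0 \<in> grade R0 R1 j"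
        unfolding a0_def b0_def using g galp gbep by blast+
      have ba: "be (al x) = al (be x)" for x using ab by (simp add: fun_eq_iff)
      note S = ba funpow_swap1[symmetric] a0_def b0_def c0_def cab fp_comm[OF ab] fp_comm[OF ab[symmetric]] fp_add mult_2 add_ac
      have L1: "(al ^^ k) ((al ^^ (k + 1)) ((be ^^ (k + 1)) a)) = al (be a0)" by (simp add: S)
      have L2: "(be ^^ k) (br ((al ^^ k) b) ((be ^^ k) c) m) = br b0 c0 m" by (simp add: bebp S)
      have R1: "(al ^^ k) (br ((al ^^ k) ((be ^^ (k + 1)) a)) ((be ^^ k) b) (n - r)) = br (be a0) b0 (n - r)" for r
        by (simp add: albp S)
      have R2: "(be ^^ k) ((be ^^ (k + 1)) c) = be c0" by (simp add: S)
      have R3: "(al ^^ k) ((be ^^ (k + 1)) b) = be b0" by (simp add: S)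
      have R4: "(be ^^ k) (br ((al ^^ k) ((al ^^ (k + 1)) a)) ((be ^^ k) c) n) = br (al a0) c0 n"
        by (simp add: bebp S)
      show ?thesis unfolding L1 L2 R1 R2 R3 R4 by (rule jac[OF ij ga])
    qed
  qed
qed

end
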